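(* Let $\mathbf A$ be a finite subdirectly irreducible cBCK-algebra of height $n=\mathrm{h}(\mathbf A)$, let $k$ be a divisor of $n$ with $k\neq 1$ and $k\neq n$, and let $A_k=\{x\in A \mid k \text{ divides } \mathrm{h}(x)\}$. Then $A_k\cup \mathrm{m}(\mathbf A)$ is the universe of a subalgebra of $\mathbf A$ if and only if $\mathrm{b}(\mathbf A)\subseteq A_k$ and $\mathrm{m}(\mathbf A)\subseteq A_k$.
   Context: A BCK-algebra is an algebra $(A,\ominus,0)$ of type $(2,0)$ satisfying $((x\ominus y)\ominus(x\ominus z))\ominus(z\ominus y)=0$, $x\ominus 0=x$, $0\ominus x=0$, and ($x\ominus y=0$ and $y\ominus x=0$ imply $x=y$); it is ordered by $x\le y$ iff $x\ominus y=0$. A cBCK-algebra is a BCK-algebra satisfying $x\ominus(x\ominus y)=y\ominus(y\ominus x)$; its order is a meet-semilattice with $x\wedge y=x\ominus(x\ominus y)$. Finite subdirectly irreducible cBCK-algebras are, as posets, rooted trees with root $0$ (with a unique atom if nontrivial). For $a\in A$, the height is $\mathrm{h}(a)=|[0,a]|-1$, and $\mathrm{h}(\mathbf A)=\sup\{\mathrm{h}(a)\mid a\in A\}$. $\mathrm{m}(\mathbf A)$ is the set of maximal elements of $\mathbf A$. $\mathrm{b}(\mathbf A)$ is the set of branching elements: $b\in\mathrm{b}(\mathbf A)$ iff there exist $c,d\in A$ with $c,d>b$ and $c\wedge d=b$. *)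

theory Defs
  imports Main
begin

definition bck_algebra :: "'a set \<Rightarrow> ('a \<Rightarrow> 'a \<Rightarrow> 'a) \<Rightarrow> 'a \<Rightarrow> bool" where
  "bck_algebra A sub zero \<longleftrightarrow>
     zero \<in> A \<and> (\<forall>x\<in>A. \<forall>y\<in>A. sub x y \<in> A) \<and>
     (\<forall>x\<in>A. \<forall>y\<in>A. \<forall>z\<in>A. sub (sub (sub x y) (sub x z)) (sub z y) = zero) \<and>
     (\<forall>x\<in>A. sub x zero = x) \<and>
     (\<forall>x\<in>A. sub zero x = zero) \<and>
     (\<forall>x\<in>A. \<forall>y\<in>A. sub x y = zero \<and> sub y x = zero \<longrightarrow> x = y)"

definition cbck_algebra :: "'a set \<Rightarrow> ('a \<Rightarrow> 'a \<Rightarrow> 'a) \<Rightarrow> 'a \<Rightarrow> bool" where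
  "cbck_algebra A sub zero \<longleftrightarrow> bck_algebra A sub zero \<and>
     (\<forall>x\<in>A. \<forall>y\<in>A. sub x (sub x y) = sub y (sub y x))"

definition bck_le :: "('a \<Rightarrow> 'a \<Rightarrow> 'a) \<Rightarrow> 'a \<Rightarrow> 'a \<Rightarrow> 'a \<Rightarrow> bool" where
  "bck_le sub zero x y \<longleftrightarrow> sub x y = zero"

definition bck_meet :: "('a \<Rightarrow> 'a \<Rightarrow> 'a) \<Rightarrow> 'a \<Rightarrow> 'a \<Rightarrow> 'a" where
  "bck_meet sub x y = sub x (sub x y)"

definition congruence :: "'a set \<Rightarrow> ('a \<Rightarrow> 'a \<Rightarrow> 'a) \<Rightarrow> ('a \<times> 'a) set \<Rightarrow> bool" where
  "congruence A sub \<theta> \<longleftrightarrow> equiv A \<theta> \<and>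
     (\<forall>x y u v. (x, y) \<in> \<theta> \<longrightarrow> (u, v) \<in> \<theta> \<longrightarrow> (sub x u, sub y v) \<in> \<theta>)"

text \<open>Subdirectly irreducible: nontrivial, and there is a least congruence
  among the congruences different from the identity (a monolith).\<close>
definition subdirectly_irreducible :: "'a set \<Rightarrow> ('a \<Rightarrow> 'a \<Rightarrow> 'a) \<Rightarrow> bool" where
  "subdirectly_irreducible A sub \<longleftrightarrow>
     (\<exists>x\<in>A. \<exists>y\<in>A. x \<noteq> y) \<and>
     (\<exists>\<mu>. congruence A sub \<mu> \<and> \<mu> \<noteq> Id_on A \<and>
        (\<forall>\<theta>. congruence A sub \<theta> \<and> \<theta> \<noteq> Id_on A \<longrightarrow> \<mu> \<subseteq> \<theta>))"

definition height :: "'a set \<Rightarrow> ('a \<Rightarrow> 'a \<Rightarrow> 'a) \<Rightarrow> 'a \<Rightarrow> 'a \<Rightarrow> nat" where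
  "height A sub zero a = card {x \<in> A. bck_le sub zero zero x \<and> bck_le sub zero x a} - 1"

definition alg_height :: "'a set \<Rightarrow> ('a \<Rightarrow> 'a \<Rightarrow> 'a) \<Rightarrow> 'a \<Rightarrow> nat" where
  "alg_height A sub zero = Sup (height A sub zero ` A)"

definition maximals :: "'a set \<Rightarrow> ('a \<Rightarrow> 'a \<Rightarrow> 'a) \<Rightarrow> 'a \<Rightarrow> 'a set" where
  "maximals A sub zero = {a \<in> A. \<forall>b\<in>A. bck_le sub zero a b \<longrightarrow> b = a}"

definition branchings :: "'a set \<Rightarrow> ('a \<Rightarrow> 'a \<Rightarrow> 'a) \<Rightarrow> 'a \<Rightarrow> 'a set" where
  "branchings A sub zero = {b \<in> A. \<exists>c\<in>A. \<exists>d\<in>A.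
      bck_le sub zero b c \<and> c \<noteq> b \<and> bck_le sub zero b d \<and> d \<noteq> b \<and> bck_meet sub c d = b}"

definition is_subuniverse :: "'a set \<Rightarrow> ('a \<Rightarrow> 'a \<Rightarrow> 'a) \<Rightarrow> 'a \<Rightarrow> 'a set \<Rightarrow> bool" where
  "is_subuniverse A sub zero S \<longleftrightarrow> S \<subseteq> A \<and> zero \<in> S \<and> (\<forall>x\<in>S. \<forall>y\<in>S. sub x y \<in> S)"

end

theory Submission
  imports Defs
begin

locale cbck =
  fixes A :: "'a set" and sub :: "'a \<Rightarrow> 'a \<Rightarrow> 'a" (infixl "\<ominus>" 65) and zero :: 'a
  assumes cb: "cbck_algebra A sub zero"
begin

lemma zin: "zero \<in> A" using cb unfolding cbck_algebra_def bck_algebra_def by blast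
lemma cl[simp]: "x \<in> A \<Longrightarrow> y \<in> A \<Longrightarrow> x \<ominus> y \<in> A"
  using cb unfolding cbck_algebra_def bck_algebra_def by blast
lemma ax1: "x \<in> A \<Longrightarrow> y \<in> A \<Longrightarrow> z \<in> A \<Longrightarrow> ((x \<ominus> y) \<ominus> (x \<ominus> z)) \<ominus> (z \<ominus> y) = zero"
  using cb unfolding cbck_algebra_def bck_algebra_def by blast
lemma ax2[simp]: "x \<in> A \<Longrightarrow> x \<ominus> zero = x"
  using cb unfolding cbck_algebra_def bck_algebra_def by blast
lemma ax3[simp]: "x \<in> A \<Longrightarrow> zero \<ominus> x = zero"
  using cb unfolding cbck_algebra_def bck_algebra_def by blast
lemma asym: "x \<in> A \<Longrightarrow> y \<in> A \<Longrightarrow> x \<ominus> y = zero \<Longrightarrow> y \<ominus> x = zero \<Longrightarrow> x = y"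
  using cb unfolding cbck_algebra_def bck_algebra_def by blast
lemma comm: "x \<in> A \<Longrightarrow> y \<in> A \<Longrightarrow> x \<ominus> (x \<ominus> y) = y \<ominus> (y \<ominus> x)"
  using cb unfolding cbck_algebra_def by blast

lemma self[simp]: "x \<in> A \<Longrightarrow> x \<ominus> x = zero"
  using ax1[of x zero zero] zin by simp
lemma le_sub: "x \<in> A \<Longrightarrow> y \<in> A \<Longrightarrow> (x \<ominus> y) \<ominus> x = zero"
  using ax1[of x y zero] zin by simp
lemma meet_le: "x \<in> A \<Longrightarrow> z \<in> A \<Longrightarrow> (x \<ominus> (x \<ominus> z)) \<ominus> z = zero"
  using ax1[of x zero z] zin by simp
lemma trans: "x \<in> A \<Longrightarrow> y \<in> A \<Longrightarrow> z \<in> A \<Longrightarrow> x \<ominus> y = zero \<Longrightarrow> y \<ominus> z = zero \<Longrightarrow> x \<ominus> z = zero"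
  using ax1[of x z y] by simp
lemma anti2: "x \<in> A \<Longrightarrow> y \<in> A \<Longrightarrow> z \<in> A \<Longrightarrow> x \<ominus> y = zero \<Longrightarrow> (z \<ominus> y) \<ominus> (z \<ominus> x) = zero"
  using ax1[of z y x] by simp
lemma exch_le: "x \<in> A \<Longrightarrow> y \<in> A \<Longrightarrow> z \<in> A \<Longrightarrow> ((x \<ominus> y) \<ominus> z) \<ominus> ((x \<ominus> z) \<ominus> y) = zero"
proof -
  assume a: "x \<in> A" "y \<in> A" "z \<in> A"
  have 1: "((x \<ominus> y) \<ominus> z) \<ominus> ((x \<ominus> y) \<ominus> (x \<ominus> (x \<ominus> z))) = zero"
    using anti2[of "x \<ominus> (x \<ominus> z)" z "x \<ominus> y"] meet_le a by simp
  have 2: "((x \<ominus> y) \<ominus> (x \<ominus> (x \<ominus> z))) \<ominus> ((x \<ominus> z) \<ominus> y) = zero"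
    using ax1[of x y "x \<ominus> z"] a by simp
  show ?thesis using trans[OF _ _ _ 1 2] a by simp
qed
lemma exch: "x \<in> A \<Longrightarrow> y \<in> A \<Longrightarrow> z \<in> A \<Longrightarrow> (x \<ominus> y) \<ominus> z = (x \<ominus> z) \<ominus> y"
  by (rule asym) (simp_all add: exch_le)
lemma mono1: "x \<in> A \<Longrightarrow> y \<in> A \<Longrightarrow> z \<in> A \<Longrightarrow> x \<ominus> y = zero \<Longrightarrow> (x \<ominus> z) \<ominus> (y \<ominus> z) = zero"
  using ax1[of x z y] by simp
lemma sub_sub_le: "x \<in> A \<Longrightarrow> y \<in> A \<Longrightarrow> z \<in> A \<Longrightarrow> ((x \<ominus> z) \<ominus> (y \<ominus> z)) \<ominus> (x \<ominus> y) = zero"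
  using ax1[of x z y] exch[of "x \<ominus> z" "y \<ominus> z" "x \<ominus> y"] by simp
lemma sub_sub_le2: "x \<in> A \<Longrightarrow> y \<in> A \<Longrightarrow> z \<in> A \<Longrightarrow> ((z \<ominus> y) \<ominus> (z \<ominus> x)) \<ominus> (x \<ominus> y) = zero"
  using ax1[of z y x] by simp
lemma leq_meet: "x \<in> A \<Longrightarrow> y \<in> A \<Longrightarrow> x \<ominus> y = zero \<Longrightarrow> y \<ominus> (y \<ominus> x) = x"
  using comm[of x y] by simp
lemma leq_meet2: "x \<in> A \<Longrightarrow> y \<in> A \<Longrightarrow> x \<ominus> y = zero \<Longrightarrow> x \<ominus> (x \<ominus> y) = x"
  by simp
lemma meet_le2: "x \<in> A \<Longrightarrow> y \<in> A \<Longrightarrow> (x \<ominus> (x \<ominus> y)) \<ominus> x = zero"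
  by (simp add: le_sub)
lemma glb: "x \<in> A \<Longrightarrow> y \<in> A \<Longrightarrow> z \<in> A \<Longrightarrow> z \<ominus> x = zero \<Longrightarrow> z \<ominus> y = zero \<Longrightarrow> z \<ominus> (x \<ominus> (x \<ominus> y)) = zero"
proof -
  assume a: "x \<in> A" "y \<in> A" "z \<in> A" "z \<ominus> x = zero" "z \<ominus> y = zero"
  have "(x \<ominus> (x \<ominus> z)) \<ominus> (x \<ominus> (x \<ominus> y)) = zero"
    using anti2[of "x \<ominus> y" "x \<ominus> z" x] anti2[of z y x] a by simp
  moreover have "x \<ominus> (x \<ominus> z) = z" using leq_meet[of z x] a by simp
  ultimately show ?thesis by simp
qed
lemma tri: "x \<in> A \<Longrightarrow> y \<in> A \<Longrightarrow> x \<ominus> (x \<ominus> (x \<ominus> y)) = x \<ominus> y"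
  by (rule asym) (simp_all add: meet_le anti2)
lemma F3: "x \<in> A \<Longrightarrow> y \<in> A \<Longrightarrow> u \<in> A \<Longrightarrow> x \<ominus> u = zero \<Longrightarrow> x \<ominus> y = (u \<ominus> y) \<ominus> (u \<ominus> x)"
  using exch[of u y "u \<ominus> x"] leq_meet[of x u] by simp

lemma prelin:
  assumes A: "x \<in> A" "y \<in> A" "u \<in> A" and xu: "x \<ominus> u = zero" and yu: "y \<ominus> u = zero"
  shows "(x \<ominus> y) \<ominus> ((x \<ominus> y) \<ominus> (y \<ominus> x)) = zero"
proof -
  define d where "d = x \<ominus> (x \<ominus> y)"
  have dA: "d \<in> A" using A d_def by simp
  have dx: "d \<ominus> x = zero" using d_def A meet_le2 by simp
  have dy: "d \<ominus> y = zero" using d_def A meet_le by simp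
  have d2: "d = y \<ominus> (y \<ominus> x)" using d_def comm A by simp
  have xd: "x \<ominus> d = x \<ominus> y" using tri A d_def by simp
  have yd: "y \<ominus> d = y \<ominus> x" using tri A d2 by simp
  define c where "c = (x \<ominus> y) \<ominus> ((x \<ominus> y) \<ominus> (y \<ominus> x))"
  have cA: "c \<in> A" using A c_def by simp
  have ca: "c \<ominus> (x \<ominus> d) = zero" using c_def xd A meet_le2 by simp
  have cb': "c \<ominus> (y \<ominus> d) = zero" using c_def yd A meet_le by simp
  define P where "P = u \<ominus> d"
  have PA: "P \<in> A" using P_def A dA by simp
  have du: "d \<ominus> u = zero" using trans[OF dA _ _ dx xu] A by simp
  have key: "\<And>w. w \<in> A \<Longrightarrow> w \<ominus> u = zero \<Longrightarrow> d \<ominus> w = zero \<Longrightarrow> c \<ominus> (w \<ominus> d) = zero \<Longrightarrow> (u \<ominus> w) \<ominus> (P \<ominus> c) = zero"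
  proof -
    fix w assume w: "w \<in> A" "w \<ominus> u = zero" "d \<ominus> w = zero" "c \<ominus> (w \<ominus> d) = zero"
    have e1: "w \<ominus> d = P \<ominus> (u \<ominus> w)" using F3[of w d u] w dA A P_def by simp
    have QP: "(u \<ominus> w) \<ominus> P = zero" using anti2[of d w u] w dA A P_def by simp
    have "(P \<ominus> (P \<ominus> (u \<ominus> w))) \<ominus> (P \<ominus> c) = zero"
      using anti2[of c "P \<ominus> (u \<ominus> w)" P] w e1 cA PA A by simp
    moreover have "P \<ominus> (P \<ominus> (u \<ominus> w)) = u \<ominus> w" using leq_meet[of "u \<ominus> w" P] QP PA A w by simp
    ultimately show "(u \<ominus> w) \<ominus> (P \<ominus> c) = zero" by simp
  qed
  define R where "R = P \<ominus> c"
  have RA: "R \<in> A" using R_def PA cA by simp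
  have RP: "R \<ominus> P = zero" using R_def le_sub PA cA by simp
  have Pu: "P \<ominus> u = zero" using P_def le_sub A dA by simp
  have Ru: "R \<ominus> u = zero" using trans[OF RA PA _ RP Pu] A by simp
  have k1: "(u \<ominus> x) \<ominus> R = zero" using key[of x] A xu dx ca R_def by simp
  have k2: "(u \<ominus> y) \<ominus> R = zero" using key[of y] A yu dy cb' R_def by simp
  have "(u \<ominus> R) \<ominus> (u \<ominus> (u \<ominus> x)) = zero" using anti2[of "u \<ominus> x" R u] k1 A RA by simp
  hence r1: "(u \<ominus> R) \<ominus> x = zero" using leq_meet[of x u] A xu by simp
  have "(u \<ominus> R) \<ominus> (u \<ominus> (u \<ominus> y)) = zero" using anti2[of "u \<ominus> y" R u] k2 A RA by simp
  hence r2: "(u \<ominus> R) \<ominus> y = zero" using leq_meet[of y u] A yu by simp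
  have "(u \<ominus> R) \<ominus> d = zero" using glb[of x y "u \<ominus> R"] r1 r2 A RA d_def by simp
  hence "(u \<ominus> d) \<ominus> (u \<ominus> (u \<ominus> R)) = zero" using anti2[of "u \<ominus> R" d u] A RA dA by simp
  hence "P \<ominus> R = zero" using leq_meet[of R u] Ru A RA P_def by simp
  hence PR: "P \<ominus> c = P" using asym[of R P] RP RA PA R_def by simp
  have cP: "c \<ominus> P = zero"
  proof -
    have "(x \<ominus> d) \<ominus> (u \<ominus> d) = zero" using mono1[of x u d] A xu dA by simp
    thus ?thesis using trans[of c "x \<ominus> d" P] ca cA A dA P_def by simp
  qed
  have "c = P \<ominus> (P \<ominus> c)" using leq_meet[of c P] cP cA PA by simp
  thus ?thesis using PR PA c_def by simp
qed

end

context cbck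
begin

definition ideal :: "'a set \<Rightarrow> bool" where
  "ideal I \<longleftrightarrow> I \<subseteq> A \<and> zero \<in> I \<and> (\<forall>x\<in>A. \<forall>y\<in>I. x \<ominus> y \<in> I \<longrightarrow> x \<in> I)"
definition theta :: "'a set \<Rightarrow> ('a \<times> 'a) set" where
  "theta I = {(x,y). x \<in> A \<and> y \<in> A \<and> x \<ominus> y \<in> I \<and> y \<ominus> x \<in> I}"

lemma ideal_down: "ideal I \<Longrightarrow> x \<in> A \<Longrightarrow> y \<in> I \<Longrightarrow> x \<ominus> y = zero \<Longrightarrow> x \<in> I"
  unfolding ideal_def by auto

lemma ideal_mp: "ideal I \<Longrightarrow> x \<in> A \<Longrightarrow> y \<in> I \<Longrightarrow> x \<ominus> y \<in> I \<Longrightarrow> x \<in> I"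
  unfolding ideal_def by blast

lemma ideal_sub: "ideal I \<Longrightarrow> I \<subseteq> A" unfolding ideal_def by blast

lemma theta_half_trans:
  assumes I: "ideal I" and A: "x \<in> A" "y \<in> A" "z \<in> A" and "x \<ominus> y \<in> I" "y \<ominus> z \<in> I"
  shows "x \<ominus> z \<in> I"
proof -
  have "(x \<ominus> z) \<ominus> (x \<ominus> y) \<in> I"
    using ideal_down[OF I _ _ ax1[of x z y]] A assms by simp
  thus ?thesis using ideal_mp[OF I _ _, of "x \<ominus> z" "x \<ominus> y"] assms by simp
qed

lemma theta_trans: assumes "ideal I" "(x,y) \<in> theta I" "(y,z) \<in> theta I" shows "(x,z) \<in> theta I"
proof -
  have a: "x \<in> A" "y \<in> A" "z \<in> A" "x \<ominus> y \<in> I" "y \<ominus> x \<in> I" "y \<ominus> z \<in> I" "z \<ominus> y \<in> I"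
    using assms(2,3) unfolding theta_def by auto
  show ?thesis using theta_half_trans[OF assms(1) a(1,2,3) a(4,6)] theta_half_trans[OF assms(1) a(3,2,1) a(7,5)] a
    unfolding theta_def by simp
qed

lemma theta_cong: assumes I: "ideal I" shows "congruence A sub (theta I)"
proof -
  have zI: "zero \<in> I" using I ideal_def by blast
  have "equiv A (theta I)"
  proof (rule equivI)
    show "theta I \<subseteq> A \<times> A" by (auto simp: theta_def)
    show "refl_on A (theta I)" unfolding refl_on_def theta_def using zI by simp
    show "sym (theta I)" unfolding sym_def theta_def by blast
    show "trans (theta I)" unfolding trans_def using theta_trans[OF I] by blast
  qed
  moreover have "(sub x u, sub y v) \<in> theta I" if h1: "(x,y) \<in> theta I" and h2: "(u,v) \<in> theta I" for x y u v
  proof -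
    have A: "x \<in> A" "y \<in> A" "u \<in> A" "v \<in> A" "x \<ominus> y \<in> I" "y \<ominus> x \<in> I" "u \<ominus> v \<in> I" "v \<ominus> u \<in> I"
      using h1 h2 unfolding theta_def by auto
    have "(x \<ominus> u, y \<ominus> u) \<in> theta I" unfolding theta_def
      using A ideal_down[OF I _ _ sub_sub_le[of x y u]] ideal_down[OF I _ _ sub_sub_le[of y x u]] by simp
    moreover have "(y \<ominus> u, y \<ominus> v) \<in> theta I" unfolding theta_def
      using A ideal_down[OF I _ _ sub_sub_le2[of v u y]] ideal_down[OF I _ _ sub_sub_le2[of u v y]] by simp
    ultimately show ?thesis using theta_trans[OF I] by blast
  qed
  ultimately show ?thesis unfolding congruence_def by blast
qed

lemma theta_nontriv: "ideal I \<Longrightarrow> a \<in> I \<Longrightarrow> a \<noteq> zero \<Longrightarrow> theta I \<noteq> Id_on A"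
proof
  assume I: "ideal I" and a: "a \<in> I" "a \<noteq> zero" and eq: "theta I = Id_on A"
  have aA: "a \<in> A" using I a ideal_sub by blast
  have "(a, zero) \<in> theta I" unfolding theta_def using aA zin a I ideal_def by auto
  thus False using eq a by auto
qed

lemma e_exists:
  assumes si: "subdirectly_irreducible A sub"
  shows "\<exists>e\<in>A. e \<noteq> zero \<and> (\<forall>I. ideal I \<and> (\<exists>a\<in>I. a \<noteq> zero) \<longrightarrow> e \<in> I)"
proof -
  obtain \<mu> where mu: "congruence A sub \<mu>" "\<mu> \<noteq> Id_on A"
    "\<And>\<theta>. congruence A sub \<theta> \<and> \<theta> \<noteq> Id_on A \<Longrightarrow> \<mu> \<subseteq> \<theta>"
    using si unfolding subdirectly_irreducible_def by blast
  have eq: "equiv A \<mu>" using mu(1) congruence_def by blast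
  hence "\<mu> \<subseteq> A \<times> A" "Id_on A \<subseteq> \<mu>" unfolding equiv_def refl_on_def by auto
  then obtain p q where pq: "(p,q) \<in> \<mu>" "p \<noteq> q" "p \<in> A" "q \<in> A" using mu(2) by auto
  have all: "p \<ominus> q \<in> I \<and> q \<ominus> p \<in> I" if I: "ideal I" and ex: "\<exists>a\<in>I. a \<noteq> zero" for I
  proof -
    obtain a where a: "a \<in> I" "a \<noteq> zero" using ex by blast
    have "\<mu> \<subseteq> theta I" using mu(3)[of "theta I"] theta_cong[OF I] theta_nontriv[OF I a] by blast
    hence "(p,q) \<in> theta I" using pq(1) by blast
    thus ?thesis unfolding theta_def by simp
  qed
  show ?thesis
  proof (cases "p \<ominus> q = zero")
    case True
    hence "q \<ominus> p \<noteq> zero" using asym pq by blast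
    moreover have "q \<ominus> p \<in> A" using pq by simp
    ultimately show ?thesis using all by blast
  next
    case False
    moreover have "p \<ominus> q \<in> A" using pq by simp
    ultimately show ?thesis using all by blast
  qed
qed

lemma polar_ideal: assumes xA: "x \<in> A" shows "ideal {z \<in> A. z \<ominus> (z \<ominus> x) = zero}"
  unfolding ideal_def
proof (intro conjI ballI impI)
  show "{z \<in> A. z \<ominus> (z \<ominus> x) = zero} \<subseteq> A" by blast
  show "zero \<in> {z \<in> A. z \<ominus> (z \<ominus> x) = zero}" using zin xA by simp
  fix z w assume z: "z \<in> A" and w: "w \<in> {z \<in> A. z \<ominus> (z \<ominus> x) = zero}"
    and zw: "z \<ominus> w \<in> {z \<in> A. z \<ominus> (z \<ominus> x) = zero}"
  have wA: "w \<in> A" and w0: "w \<ominus> (w \<ominus> x) = zero" and zw0: "(z \<ominus> w) \<ominus> ((z \<ominus> w) \<ominus> x) = zero"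
    using w zw by auto
  define u where "u = z \<ominus> (z \<ominus> x)"
  have uA: "u \<in> A" using u_def z xA by simp
  have uz: "u \<ominus> z = zero" using u_def meet_le2 z xA by simp
  have ux: "u \<ominus> x = zero" using u_def meet_le z xA by simp
  have a1: "(u \<ominus> w) \<ominus> (z \<ominus> w) = zero" using mono1[OF uA z wA uz] .
  have a2: "(u \<ominus> w) \<ominus> x = zero" using trans[OF _ uA xA le_sub[OF uA wA] ux] uA wA by simp
  have "(u \<ominus> w) \<ominus> zero = zero" using glb[of "z \<ominus> w" x "u \<ominus> w"] a1 a2 zw0 uA wA z xA zin by simp
  hence uw: "u \<ominus> w = zero" using uA wA by simp
  have "u \<ominus> zero = zero" using glb[of w x u] uw ux w0 uA wA xA by simp
  hence "u = zero" using uA by simp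
  thus "z \<in> {z \<in> A. z \<ominus> (z \<ominus> x) = zero}" using u_def z by simp
qed

end

locale cbck_fin = cbck +
  assumes fin: "finite A" and si: "subdirectly_irreducible A sub"
begin

lemma S2: assumes "x \<in> A" "y \<in> A" "x \<noteq> zero" "y \<noteq> zero" shows "x \<ominus> (x \<ominus> y) \<noteq> zero"
proof
  assume m: "x \<ominus> (x \<ominus> y) = zero"
  obtain e where e: "e \<in> A" "e \<noteq> zero" "\<And>I. ideal I \<and> (\<exists>a\<in>I. a \<noteq> zero) \<Longrightarrow> e \<in> I"
    using e_exists[OF si] by blast
  have "y \<ominus> (y \<ominus> x) = zero" using m comm assms by metis
  hence "e \<in> {z \<in> A. z \<ominus> (z \<ominus> x) = zero}" using e(3) polar_ideal[of x] assms by blast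
  hence "e \<ominus> (e \<ominus> x) = zero" by simp
  hence "x \<ominus> (x \<ominus> e) = zero" using comm assms e by metis
  hence "e \<in> {z \<in> A. z \<ominus> (z \<ominus> e) = zero}" using e polar_ideal[of e] assms by blast
  thus False using e by simp
qed

lemma chain: assumes "w \<in> A" "y \<in> A" "x \<in> A" "w \<ominus> x = zero" "y \<ominus> x = zero"
  shows "w \<ominus> y = zero \<or> y \<ominus> w = zero"
  using prelin[of w y x] S2[of "w \<ominus> y" "y \<ominus> w"] assms by auto

end

context cbck_fin
begin

abbreviation h where "h \<equiv> height A sub zero"
definition D where "D x = {w \<in> A. w \<ominus> x = zero}"

lemma h_D: "h a = card (D a) - 1"
proof -
  have "{x \<in> A. bck_le sub zero zero x \<and> bck_le sub zero x a} = D a"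
    unfolding D_def bck_le_def using ax3 by blast
  thus ?thesis unfolding height_def by simp
qed

lemma finD: "finite (D x)" unfolding D_def using fin by simp

lemma hsub: assumes xA: "x \<in> A" and yA: "y \<in> A" and yx: "y \<ominus> x = zero"
  shows "h (x \<ominus> y) + h y = h x"
proof -
  define I where "I = {w \<in> A. y \<ominus> w = zero \<and> w \<ominus> x = zero}"
  have finI: "finite I" using fin I_def by simp
  have img: "(\<lambda>w. x \<ominus> w) ` I = D (x \<ominus> y)"
  proof
    show "(\<lambda>w. x \<ominus> w) ` I \<subseteq> D (x \<ominus> y)"
    proof
      fix v assume "v \<in> (\<lambda>w. x \<ominus> w) ` I"
      then obtain w where w: "w \<in> A" "y \<ominus> w = zero" "v = x \<ominus> w" unfolding I_def by auto
      show "v \<in> D (x \<ominus> y)" unfolding D_def using anti2[of y w x] w xA yA by simp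
    qed
    show "D (x \<ominus> y) \<subseteq> (\<lambda>w. x \<ominus> w) ` I"
    proof
      fix w assume "w \<in> D (x \<ominus> y)"
      hence wA: "w \<in> A" and wxy: "w \<ominus> (x \<ominus> y) = zero" unfolding D_def by auto
      have wx: "w \<ominus> x = zero" using trans[OF wA _ xA wxy le_sub[OF xA yA]] xA yA by simp
      have e: "x \<ominus> (x \<ominus> w) = w" using leq_meet[OF wA xA wx] .
      have "(x \<ominus> (x \<ominus> y)) \<ominus> (x \<ominus> w) = zero" using anti2[OF wA _ xA wxy] xA yA by simp
      hence "y \<ominus> (x \<ominus> w) = zero" using leq_meet[OF yA xA yx] by simp
      hence "x \<ominus> w \<in> I" unfolding I_def using le_sub[OF xA wA] xA wA by simp
      thus "w \<in> (\<lambda>w. x \<ominus> w) ` I" using e by (metis image_eqI)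
    qed
  qed
  have inj: "inj_on (\<lambda>w. x \<ominus> w) I"
  proof (rule inj_onI)
    fix v w assume "v \<in> I" "w \<in> I" "x \<ominus> v = x \<ominus> w"
    hence "v \<in> A" "v \<ominus> x = zero" "w \<in> A" "w \<ominus> x = zero" "x \<ominus> (x \<ominus> v) = x \<ominus> (x \<ominus> w)"
      unfolding I_def by auto
    thus "v = w" using leq_meet[of v x] leq_meet[of w x] xA by simp
  qed
  have c1: "card (D (x \<ominus> y)) = card I" using card_image[OF inj] img by simp
  have un: "D x = D y \<union> I"
  proof
    show "D x \<subseteq> D y \<union> I"
    proof
      fix w assume "w \<in> D x"
      hence wA: "w \<in> A" and wx: "w \<ominus> x = zero" unfolding D_def by auto
      show "w \<in> D y \<union> I" using chain[OF wA yA xA wx yx] wA wx unfolding D_def I_def by auto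
    qed
    show "D y \<union> I \<subseteq> D x"
    proof
      fix w assume "w \<in> D y \<union> I"
      hence "w \<in> A \<and> (w \<ominus> y = zero \<or> w \<ominus> x = zero)" unfolding D_def I_def by auto
      thus "w \<in> D x" unfolding D_def using trans[of w y x] xA yA yx by auto
    qed
  qed
  have int: "D y \<inter> I = {y}"
  proof
    show "D y \<inter> I \<subseteq> {y}"
    proof
      fix w assume "w \<in> D y \<inter> I"
      hence "w \<in> A" "w \<ominus> y = zero" "y \<ominus> w = zero" unfolding D_def I_def by auto
      thus "w \<in> {y}" using asym[of w y] yA by simp
    qed
    show "{y} \<subseteq> D y \<inter> I" unfolding D_def I_def using yA yx by simp
  qed
  have "card (D y) + card I = card (D y \<union> I) + card (D y \<inter> I)"
    using card_Un_Int[of "D y" I] finD finI by blast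
  hence "card (D y) + card I = card (D x) + 1" unfolding un int by simp
  moreover have "card (D y) \<ge> 1"
  proof -
    have "y \<in> D y" unfolding D_def using yA by simp
    hence "D y \<noteq> {}" by blast
    thus ?thesis using finD[of y] card_gt_0_iff[of "D y"] by linarith
  qed
  moreover have "card I \<ge> 1"
  proof -
    have "y \<in> I" unfolding I_def using yA yx by simp
    hence "I \<noteq> {}" by blast
    thus ?thesis using finI card_gt_0_iff[of I] by linarith
  qed
  ultimately have "card (D (x \<ominus> y)) - 1 + (card (D y) - 1) = card (D x) - 1" using c1 by linarith
  thus ?thesis using h_D[of "x \<ominus> y"] h_D[of y] h_D[of x] by presburger
qed

lemma h0: "h zero = 0"
proof -
  have "D zero = {zero}" unfolding D_def using zin by auto
  thus ?thesis unfolding h_D by simp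
qed

lemma hpos: assumes "x \<in> A" "x \<noteq> zero" shows "h x \<noteq> 0"
proof -
  have "{zero, x} \<subseteq> D x" unfolding D_def using assms zin by auto
  hence "card {zero, x} \<le> card (D x)" using finD card_mono by blast
  thus ?thesis unfolding h_D using assms by simp
qed

lemma hmono: "x \<in> A \<Longrightarrow> y \<in> A \<Longrightarrow> y \<ominus> x = zero \<Longrightarrow> h y \<le> h x"
  using hsub[of x y] by linarith

lemma heq: assumes "x \<in> A" "y \<in> A" "y \<ominus> x = zero" "h y = h x" shows "y = x"
proof -
  have "h (x \<ominus> y) = 0" using hsub[of x y] assms by linarith
  hence "x \<ominus> y = zero" using hpos[of "x \<ominus> y"] assms by auto
  thus ?thesis using asym assms by blast
qed

lemma hmeet: "x \<in> A \<Longrightarrow> y \<in> A \<Longrightarrow> h (x \<ominus> y) = h x - h (x \<ominus> (x \<ominus> y))"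
proof -
  assume a: "x \<in> A" "y \<in> A"
  have "h (x \<ominus> (x \<ominus> (x \<ominus> y))) + h (x \<ominus> (x \<ominus> y)) = h x"
    using hsub[of x "x \<ominus> (x \<ominus> y)"] meet_le2[of x y] a by simp
  thus ?thesis using tri[of x y] a by simp
qed

lemma max_above:
  assumes cA: "c \<in> A" and bnd: "\<forall>x\<in>A. c \<ominus> x = zero \<longrightarrow> h x \<le> N" 
  shows "\<exists>w. w \<in> maximals A sub zero \<and> c \<ominus> w = zero"
proof -
  define U where "U = {w \<in> A. c \<ominus> w = zero}"
  have "finite (h ` U)" using fin U_def by simp
  moreover have "h ` U \<noteq> {}" using cA U_def by auto
  ultimately have "Max (h ` U) \<in> h ` U" by (rule Max_in)
  then obtain w where w: "w \<in> U" "h w = Max (h ` U)" by auto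
  have wmax: "\<forall>v\<in>U. h v \<le> h w" using w \<open>finite (h ` U)\<close> by simp
  have "w \<in> maximals A sub zero" unfolding maximals_def bck_le_def
  proof (intro CollectI conjI ballI impI)
    show "w \<in> A" using w U_def by simp
    fix b assume bA: "b \<in> A" and wb: "w \<ominus> b = zero"
    have "c \<ominus> b = zero" using trans[OF cA _ bA _ wb] w U_def by simp
    hence "h b \<le> h w" using wmax bA U_def by simp
    moreover have "h w \<le> h b" using hmono[OF bA _ wb] w U_def by simp
    ultimately show "b = w" using heq[OF bA _ wb] w U_def by simp
  qed
  thus ?thesis using w U_def by auto
qed

end

context cbck_fin
begin

lemma main:
  assumes n: "n = alg_height A sub zero" and kn: "k dvd n" and k1: "k \<noteq> 1" and kn2: "k \<noteq> n"
  shows "is_subuniverse A sub zero ({x \<in> A. k dvd h x} \<union> maximals A sub zero)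
         \<longleftrightarrow> branchings A sub zero \<subseteq> {x \<in> A. k dvd h x}
           \<and> maximals A sub zero \<subseteq> {x \<in> A. k dvd h x}"
    (is "is_subuniverse A sub zero (?K \<union> ?M) \<longleftrightarrow> ?B \<subseteq> ?K \<and> ?M \<subseteq> ?K")
proof -
  obtain x0 where x0: "x0 \<in> A" "x0 \<noteq> zero"
    using si zin unfolding subdirectly_irreducible_def by metis
  have finH: "finite (h ` A)" using fin by simp
  have neH: "h ` A \<noteq> {}" using zin by auto
  have nmax: "n = Max (h ` A)" using n cSup_eq_Max[OF finH neH] unfolding alg_height_def by simp
  have hle: "\<forall>x\<in>A. h x \<le> n" using nmax finH by simp
  obtain M where M: "M \<in> A" "h M = n" using Max_in[OF finH neH] nmax by auto
  have n1: "n \<noteq> 0" using hpos[OF x0] hle x0 by fastforce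
  have k0: "k \<noteq> 0" using kn n1 by auto
  have Mz: "M \<noteq> zero" using M n1 h0 by auto
  have Mmax: "M \<in> ?M" unfolding maximals_def bck_le_def
  proof (intro CollectI conjI ballI impI)
    show "M \<in> A" by (rule M(1))
    fix b assume bA: "b \<in> A" and Mb: "M \<ominus> b = zero"
    have "h M \<le> h b" using hmono[OF bA M(1) Mb] .
    hence "h b = h M" using hle bA M by fastforce
    thus "b = M" using heq[OF bA M(1) Mb] by simp
  qed
  have maxeq: "b = a" if "a \<in> ?M" "b \<in> A" "a \<ominus> b = zero" for a b
    using that unfolding maximals_def bck_le_def by blast
  have MA: "?M \<subseteq> A" unfolding maximals_def by blast
  have mnz: "m \<noteq> zero" if "m \<in> ?M" for m
  proof
    assume "m = zero"
    hence "x0 = zero" using maxeq[of m x0] that x0 by simp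
    thus False using x0 by simp
  qed
  show ?thesis
  proof
    assume sub: "is_subuniverse A sub zero (?K \<union> ?M)"
    have clo: "a \<ominus> b \<in> ?K \<union> ?M" if "a \<in> ?K \<union> ?M" "b \<in> ?K \<union> ?M" for a b
      using sub that unfolding is_subuniverse_def by blast
    have MK: "?M \<subseteq> ?K"
    proof
      fix m assume mM: "m \<in> ?M"
      have mA: "m \<in> A" using mM MA by blast
      show "m \<in> ?K"
      proof (rule ccontr)
        assume nk: "m \<notin> ?K"
        hence nkr: "\<not> k dvd h m" using mA by simp
        define z where "z = M \<ominus> (M \<ominus> m)"
        have zA: "z \<in> A" using z_def M mA by simp
        have zM: "z \<ominus> M = zero" using z_def meet_le2 M mA by simp
        have zm: "z \<ominus> m = zero" using z_def meet_le M mA by simp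
        have zz: "z \<noteq> zero" using S2[OF M(1) mA Mz mnz[OF mM]] z_def by simp
        have tn: "h z \<le> n" using hle zA by simp
        have tpos: "h z \<noteq> 0" using hpos[OF zA zz] .
        have h1: "h (M \<ominus> m) = n - h z" using hmeet[OF M(1) mA] M z_def by simp
        have "M \<ominus> m \<in> ?K \<union> ?M" using clo Mmax mM by blast
        moreover have "M \<ominus> m \<notin> ?M"
        proof
          assume "M \<ominus> m \<in> ?M"
          hence "M = M \<ominus> m" using maxeq[of "M \<ominus> m" M] le_sub M mA by simp
          hence "n - h z = n" using h1 M by simp
          thus False using tn tpos n1 by linarith
        qed
        ultimately have "k dvd n - h z" using h1 by simp
        hence kt: "k dvd h z" using kn tn by (metis diff_diff_cancel dvd_diff_nat)
        hence "z \<in> ?K" using zA by simp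
        hence "m \<ominus> z \<in> ?K \<union> ?M" using clo mM by blast
        moreover have h2: "h (m \<ominus> z) + h z = h m" using hsub[OF mA zA zm] .
        moreover have "m \<ominus> z \<notin> ?M"
        proof
          assume "m \<ominus> z \<in> ?M"
          hence "m = m \<ominus> z" using maxeq[of "m \<ominus> z" m] le_sub mA zA by simp
          thus False using h2 tpos by simp
        qed
        ultimately have "k dvd h (m \<ominus> z)" by simp
        hence "k dvd h m" using kt h2 by (metis dvd_add)
        thus False using nkr by simp
      qed
    qed
    have BK: "?B \<subseteq> ?K"
    proof
      fix b assume "b \<in> ?B"
      then obtain c d where b: "b \<in> A" "c \<in> A" "d \<in> A" "b \<ominus> c = zero" "c \<noteq> b" "b \<ominus> d = zero" "d \<noteq> b"
        "c \<ominus> (c \<ominus> d) = b"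
        unfolding branchings_def bck_le_def bck_meet_def by blast
      have bnd: "\<forall>x\<in>A. w \<ominus> x = zero \<longrightarrow> h x \<le> n" for w using hle by blast
      obtain c' where c': "c' \<in> ?M" "c \<ominus> c' = zero" using max_above[OF b(2) bnd] by blast
      obtain d' where d': "d' \<in> ?M" "d \<ominus> d' = zero" using max_above[OF b(3) bnd] by blast
      have c'A: "c' \<in> A" and d'A: "d' \<in> A" using c' d' MA by auto
      define e where "e = c' \<ominus> (c' \<ominus> d')"
      have eA: "e \<in> A" using e_def c'A d'A by simp
      have ec': "e \<ominus> c' = zero" using e_def meet_le2 c'A d'A by simp
      have ed': "e \<ominus> d' = zero" using e_def meet_le c'A d'A by simp
      have notcd: "\<not> (c \<ominus> d = zero \<or> d \<ominus> c = zero)"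
      proof
        assume "c \<ominus> d = zero \<or> d \<ominus> c = zero"
        thus False
        proof
          assume "c \<ominus> d = zero"
          hence "b = c" using b by simp
          thus False using b by simp
        next
          assume "d \<ominus> c = zero"
          hence "b = d" using b leq_meet[of d c] by simp
          thus False using b by simp
        qed
      qed
      have ec: "e \<ominus> c = zero"
      proof -
        have "e \<ominus> c = zero \<or> c \<ominus> e = zero" using chain[OF eA b(2) c'A ec' c'(2)] .
        moreover have "c \<ominus> e \<noteq> zero"
        proof
          assume "c \<ominus> e = zero"
          hence "c \<ominus> d' = zero" using trans[OF b(2) eA d'A _ ed'] by simp
          thus False using chain[OF b(2) b(3) d'A _ d'(2)] notcd by blast
        qed
        ultimately show ?thesis by blast
      qed
      have ed: "e \<ominus> d = zero"
      proof -
        have "e \<ominus> d = zero \<or> d \<ominus> e = zero" using chain[OF eA b(3) d'A ed' d'(2)] .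
        moreover have "d \<ominus> e \<noteq> zero"
        proof
          assume "d \<ominus> e = zero"
          hence "d \<ominus> c' = zero" using trans[OF b(3) eA c'A _ ec'] by simp
          thus False using chain[OF b(2) b(3) c'A c'(2)] notcd by blast
        qed
        ultimately show ?thesis by blast
      qed
      have eb: "e \<ominus> b = zero" using glb[OF b(2) b(3) eA ec ed] b(8) by simp
      have bc': "b \<ominus> c' = zero" using trans[OF b(1) b(2) c'A b(4) c'(2)] .
      have bd': "b \<ominus> d' = zero" using trans[OF b(1) b(3) d'A b(6) d'(2)] .
      have be: "b \<ominus> e = zero" using glb[OF c'A d'A b(1) bc' bd'] e_def by simp
      have ebq: "e = b" using asym[OF eA b(1) eb be] .
      have hcd: "h (c' \<ominus> d') = h c' - h b" using hmeet[OF c'A d'A] e_def ebq by simp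
      have hbc: "h b \<le> h c'" using hmono[OF c'A b(1) bc'] .
      have kc: "k dvd h c'" using MK c' by blast
      have "c' \<ominus> d' \<in> ?K \<union> ?M" using clo c' d' by blast
      hence "k dvd h b"
      proof
        assume "c' \<ominus> d' \<in> ?K"
        hence "k dvd h c' - h b" using hcd by simp
        thus "k dvd h b" using kc hbc by (metis diff_diff_cancel dvd_diff_nat)
      next
        assume "c' \<ominus> d' \<in> ?M"
        hence "c' = c' \<ominus> d'" using maxeq[of "c' \<ominus> d'" c'] le_sub c'A d'A by simp
        hence "h c' = h c' - h b" using hcd by metis
        hence "h b = 0" using hbc by linarith
        thus "k dvd h b" by simp
      qed
      thus "b \<in> ?K" using b(1) by simp
    qed
    show "?B \<subseteq> ?K \<and> ?M \<subseteq> ?K" using BK MK by blast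
  next
    assume BM: "?B \<subseteq> ?K \<and> ?M \<subseteq> ?K"
    have eqK: "?K \<union> ?M = ?K" using BM by blast
    have "is_subuniverse A sub zero ?K" unfolding is_subuniverse_def
    proof (intro conjI ballI)
      show "?K \<subseteq> A" by blast
      show "zero \<in> ?K" using zin h0 by simp
      fix x y assume x: "x \<in> ?K" and y: "y \<in> ?K"
      have xA: "x \<in> A" and yA: "y \<in> A" and kx: "k dvd h x" and ky: "k dvd h y" using x y by auto
      define m where "m = x \<ominus> (x \<ominus> y)"
      have mA: "m \<in> A" using m_def xA yA by simp
      have mx: "m \<ominus> x = zero" using m_def meet_le2 xA yA by simp
      have my: "m \<ominus> y = zero" using m_def meet_le xA yA by simp
      have km: "k dvd h m"
      proof (cases "m = x \<or> m = y")
        case True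
        thus ?thesis using kx ky by blast
      next
        case False
        hence nx: "x \<noteq> m" and ny: "y \<noteq> m" by auto
        have "m \<ominus> x = zero \<and> x \<noteq> m \<and> m \<ominus> y = zero \<and> y \<noteq> m \<and> x \<ominus> (x \<ominus> y) = m"
          using mx my nx ny m_def by simp
        hence "\<exists>c\<in>A. \<exists>d\<in>A. m \<ominus> c = zero \<and> c \<noteq> m \<and> m \<ominus> d = zero \<and> d \<noteq> m \<and> c \<ominus> (c \<ominus> d) = m"
          using xA yA by blast
        hence "m \<in> ?B" unfolding branchings_def bck_le_def bck_meet_def using mA by simp
        thus ?thesis using BM by blast
      qed
      have "h (x \<ominus> y) = h x - h m" using hmeet[OF xA yA] m_def by simp
      hence "k dvd h (x \<ominus> y)" using kx km by (simp add: dvd_diff_nat)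
      thus "x \<ominus> y \<in> ?K" using xA yA by simp
    qed
    thus "is_subuniverse A sub zero (?K \<union> ?M)" using eqK by simp
  qed
qed

end

theorem mainTheorem2:
  fixes A :: "'a set" and sub :: "'a \<Rightarrow> 'a \<Rightarrow> 'a" and zero :: 'a and n k :: nat
  assumes "cbck_algebra A sub zero"
    and "finite A"
    and "subdirectly_irreducible A sub"
    and "n = alg_height A sub zero"
    and "k dvd n" and "k \<noteq> 1" and "k \<noteq> n"
  shows "is_subuniverse A sub zero
           ({x \<in> A. k dvd height A sub zero x} \<union> maximals A sub zero)
         \<longleftrightarrow> branchings A sub zero \<subseteq> {x \<in> A. k dvd height A sub zero x}
           \<and> maximals A sub zero \<subseteq> {x \<in> A. k dvd height A sub zero x}"
proof -
  interpret cbck_fin A sub zero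
    using assms(1,2,3) by (simp add: cbck_fin_def cbck_fin_axioms_def cbck_def)
  show ?thesis using main[OF assms(4,5,6,7)] .
qed

end
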